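(* Fix $t\in\{1,\dots,M\}$, corresponding to the pair $(i,j)$ with $C_t=C_{i,j}$, and let $z^*=(x^*,y^* )\in F(\mathcal{T}_t)$. Define $$r_t=\begin{cases}\min\Big\{d_{sep}(z^*,C_t),\ \dfrac{d_{sep}(z^*,C_t)+d_{esc}(z^*,C_t)}{2}\Big\}, & \text{if } |K_t(z^* )|=1,\\[2mm] \min\{g(x_i^*,x_j^*,w_i,w_j),\ g(y_i^*,y_j^*,h_i,h_j)\}, & \text{if } |K_t(z^* )|=2,\end{cases}$$ where $g(a,b,c,d)=|(a-b)+(c-d)/2|/\sqrt{2}$. Then every $z\in B(z^*,r_t)$ satisfies $K_t(z)\subseteq K_t(z^* )$.
   Context: Fix reals $W,H>0$, integers $N\ge N_m\ge 2$, and widths $w_i>0$, heights $h_i>0$ for $1\le i\le N_m$. Points of $\mathbb{R}^{2N}$ are written $z=(x,y)$ with $x=(x_1,\dots,x_N)$, $y=(y_1,\dots,y_N)$. For $1\le i\le N_m$ let $B_i^x=\{z: 0\le x_i\le W-w_i\}$, $B_i^y=\{z: 0\le y_i\le H-h_i\}$; for $i\neq j$ let $B_{i,j}=B_i^x\cap B_i^y\cap B_j^x\cap B_j^y$, $O^x_{i,j}=\{z: x_i+w_i\le x_j\}$, $O^y_{i,j}=\{z: y_i+h_i\le y_j\}$. Define the closed convex sets $C_{i,j,\mathsf{L}}=O^x_{i,j}\cap B_{i,j}$, $C_{i,j,\mathsf{R}}=O^x_{j,i}\cap B_{i,j}$, $C_{i,j,\mathsf{B}}=O^y_{i,j}\cap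 B_{i,j}$, $C_{i,j,\mathsf{A}}=O^y_{j,i}\cap B_{i,j}$ (assumed nonempty) and $C_{i,j}=C_{i,j,\mathsf{L}}\cup C_{i,j,\mathsf{R}}\cup C_{i,j,\mathsf{B}}\cup C_{i,j,\mathsf{A}}$. Enumerate the pairs $1\le i<j\le N_m$ by $t=1,\dots,M$ and write $C_t=C_{i,j}$, $C_{t,k}=C_{i,j,k}$. With the Euclidean norm and $\mathrm{d}(z,C)=\inf_{c\in C}\|z-c\|$: $\mathcal{P}_t(z)=\{c\in C_t:\|z-c\|=\mathrm{d}(z,C_t)\}$, $P_{t,k}(z)$ is the unique nearest point of $C_{t,k}$ to $z$; for a fixed $\lambda\in(0,2)$, $\mathcal{T}_t(z)=\{z+\lambda(p-z):p\in\mathcal{P}_t(z)\}$, $F(\mathcal{T}_t)=\{z: z\in\mathcal{T}_t(z)\}$. Active indices: $K_t(z)=\{k\in\{\mathsf{L},\mathsf{R},\mathsf{B},\mathsf{A}\}: P_{t,k}(z)\in\mathcal{P}_t(z)\}$ (for $z^*\in F(\mathcal{T}_t)$ one has $|K_t(z^* )|\in\{1,2\}$). $d_{esc}(z^*,C_t)=\inf\{\|z-z^*\| : z\notin C_{t,k}\text{ for some }k\in K_t(z^* )\}$; $d_{sep}(z^*,C_t)=\min\{\mathrm{d}(z^*,C_{t,k}) : k\notin K_t(z^* )\}$. $B(z,r)$ is the open Euclidean ball (empty if $r=0$). *)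

theory Defs
  imports "HOL-Analysis.Analysis"
begin

text \<open>Points of R^(2N) are pairs (x,y) of vectors in real^'n, where the finite
  linearly ordered index type 'n plays the role of {1..N}.  The norm on the
  product type is the Euclidean norm sqrt(|x|^2+|y|^2).\<close>

type_synonym ('n) pt = "(real ^ 'n) \<times> (real ^ 'n)"

datatype lbl = Lf | Rt | Bw | Ab

definition Bx :: "real \<Rightarrow> ('n::finite \<Rightarrow> real) \<Rightarrow> 'n \<Rightarrow> 'n pt set" where
  "Bx W w i = {z. 0 \<le> fst z $ i \<and> fst z $ i \<le> W - w i}"

definition By :: "real \<Rightarrow> ('n::finite \<Rightarrow> real) \<Rightarrow> 'n \<Rightarrow> 'n pt set" where
  "By H h i = {z. 0 \<le> snd z $ i \<and> snd z $ i \<le> H - h i}"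

definition Bij :: "real \<Rightarrow> real \<Rightarrow> ('n::finite \<Rightarrow> real) \<Rightarrow> ('n \<Rightarrow> real) \<Rightarrow> 'n \<Rightarrow> 'n \<Rightarrow> 'n pt set" where
  "Bij W H w h i j = Bx W w i \<inter> By H h i \<inter> Bx W w j \<inter> By H h j"

definition Ox :: "('n::finite \<Rightarrow> real) \<Rightarrow> 'n \<Rightarrow> 'n \<Rightarrow> 'n pt set" where
  "Ox w i j = {z. fst z $ i + w i \<le> fst z $ j}"

definition Oy :: "('n::finite \<Rightarrow> real) \<Rightarrow> 'n \<Rightarrow> 'n \<Rightarrow> 'n pt set" where
  "Oy h i j = {z. snd z $ i + h i \<le> snd z $ j}"

definition Cpiece :: "real \<Rightarrow> real \<Rightarrow> ('n::finite \<Rightarrow> real) \<Rightarrow> ('n \<Rightarrow> real) \<Rightarrow> 'n \<Rightarrow> 'n \<Rightarrow> lbl \<Rightarrow> 'n pt set" where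
  "Cpiece W H w h i j k = (case k of
      Lf \<Rightarrow> Ox w i j \<inter> Bij W H w h i j
    | Rt \<Rightarrow> Ox w j i \<inter> Bij W H w h i j
    | Bw \<Rightarrow> Oy h i j \<inter> Bij W H w h i j
    | Ab \<Rightarrow> Oy h j i \<inter> Bij W H w h i j)"

definition Cpair :: "real \<Rightarrow> real \<Rightarrow> ('n::finite \<Rightarrow> real) \<Rightarrow> ('n \<Rightarrow> real) \<Rightarrow> 'n \<Rightarrow> 'n \<Rightarrow> 'n pt set" where
  "Cpair W H w h i j = (\<Union>k. Cpiece W H w h i j k)"

definition Pset :: "'a::metric_space set \<Rightarrow> 'a \<Rightarrow> 'a set" where
  "Pset C z = {c \<in> C. dist z c = infdist z C}"

definition Tmap :: "real \<Rightarrow> 'a::real_normed_vector set \<Rightarrow> 'a \<Rightarrow> 'a set" where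
  "Tmap lam C z = {z + lam *\<^sub>R (p - z) | p. p \<in> Pset C z}"

definition FixT :: "real \<Rightarrow> 'a::real_normed_vector set \<Rightarrow> 'a set" where
  "FixT lam C = {z. z \<in> Tmap lam C z}"

text \<open>Active indices: P_{t,k}(z) is the (unique) nearest point of the closed convex
  set C_{t,k}, i.e. the library's closest_point.\<close>
definition Kact :: "real \<Rightarrow> real \<Rightarrow> ('n::finite \<Rightarrow> real) \<Rightarrow> ('n \<Rightarrow> real) \<Rightarrow> 'n \<Rightarrow> 'n \<Rightarrow> 'n pt \<Rightarrow> lbl set" where
  "Kact W H w h i j z =
     {k. closest_point (Cpiece W H w h i j k) z \<in> Pset (Cpair W H w h i j) z}"

definition d_esc :: "real \<Rightarrow> real \<Rightarrow> ('n::finite \<Rightarrow> real) \<Rightarrow> ('n \<Rightarrow> real) \<Rightarrow> 'n \<Rightarrow> 'n \<Rightarrow> 'n pt \<Rightarrow> real" where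
  "d_esc W H w h i j zs =
     Inf {norm (z - zs) | z. \<exists>k \<in> Kact W H w h i j zs. z \<notin> Cpiece W H w h i j k}"

definition d_sep :: "real \<Rightarrow> real \<Rightarrow> ('n::finite \<Rightarrow> real) \<Rightarrow> ('n \<Rightarrow> real) \<Rightarrow> 'n \<Rightarrow> 'n \<Rightarrow> 'n pt \<Rightarrow> real" where
  "d_sep W H w h i j zs =
     Min {infdist zs (Cpiece W H w h i j k) | k. k \<notin> Kact W H w h i j zs}"

definition gfun :: "real \<Rightarrow> real \<Rightarrow> real \<Rightarrow> real \<Rightarrow> real" where
  "gfun a b c d = \<bar>(a - b) + (c - d) / 2\<bar> / sqrt 2"

text \<open>The radius r_t.  It is only defined by the paper when |K_t(z*)| is 1 or 2
  (which holds at fixed points); otherwise we put 0 (empty ball).\<close>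
definition rad :: "real \<Rightarrow> real \<Rightarrow> ('n::finite \<Rightarrow> real) \<Rightarrow> ('n \<Rightarrow> real) \<Rightarrow> 'n \<Rightarrow> 'n \<Rightarrow> 'n pt \<Rightarrow> real" where
  "rad W H w h i j zs =
     (if card (Kact W H w h i j zs) = 1 then
        min (d_sep W H w h i j zs) ((d_sep W H w h i j zs + d_esc W H w h i j zs) / 2)
      else if card (Kact W H w h i j zs) = 2 then
        min (gfun (fst zs $ i) (fst zs $ j) (w i) (w j))
            (gfun (snd zs $ i) (snd zs $ j) (h i) (h j))
      else 0)"

end

theory Submission
  imports Defs
begin

lemma nsq:
  fixes x :: "real^'n"
  assumes "i \<noteq> j"
  shows "(norm x)^2 = (x$i)^2 + (x$j)^2 + (\<Sum>k\<in>UNIV-{i,j}. (x$k)^2)"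
proof -
  have "(norm x)^2 = x \<bullet> x" by (rule power2_norm_eq_inner)
  also have "\<dots> = (\<Sum>k\<in>UNIV. (x$k)^2)"
    by (simp add: inner_vec_def power2_eq_square)
  also have "\<dots> = (x$i)^2 + (\<Sum>k\<in>UNIV-{i}. (x$k)^2)"
    by (simp add: sum.remove)
  also have "(\<Sum>k\<in>UNIV-{i}. (x$k)^2) = (x$j)^2 + (\<Sum>k\<in>UNIV-{i}-{j}. (x$k)^2)"
    using assms by (intro sum.remove) auto
  also have "UNIV-{i}-{j} = UNIV-{i,j}" by auto
  finally show ?thesis by simp
qed

lemma gap_ij:
  fixes x y :: "real^'n"
  assumes "i \<noteq> j" and "\<And>k. k \<noteq> i \<Longrightarrow> k \<noteq> j \<Longrightarrow> x$k = y$k"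
  shows "(norm x)^2 - (norm y)^2 = (x$i)^2 + (x$j)^2 - (y$i)^2 - (y$j)^2"
proof -
  have "(\<Sum>k\<in>UNIV-{i,j}. (x$k)^2) = (\<Sum>k\<in>UNIV-{i,j}. (y$k)^2)"
    using assms(2) by (intro sum.cong) auto
  thus ?thesis using nsq[OF assms(1), of x] nsq[OF assms(1), of y] by linarith
qed

lemma core2:
  fixes s d m P :: real
  assumes P: "P > 0" and m: "m \<ge> 0" and h: "s^2 + d^2 < (m+P)^2"
  shows "s < m + P" and "\<exists>S D. \<bar>D\<bar> \<le> S \<and> S \<le> m \<and> (s-S)^2 + (d-D)^2 < (2*P+m-s)^2"
proof -
  have "s^2 < (m+P)^2" using h zero_le_power2[of d] by linarith
  hence sl: "s < m+P" by (rule power2_less_imp_less) (use P m in simp)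
  show "s < m + P" by (rule sl)
  show "\<exists>S D. \<bar>D\<bar> \<le> S \<and> S \<le> m \<and> (s-S)^2 + (d-D)^2 < (2*P+m-s)^2"
  proof (cases "\<bar>d\<bar> \<le> m")
    case True
    show ?thesis
    proof (cases "s > m")
      case True
      have "(s-m)^2 < (2*P+m-s)^2" using sl True by (intro power_strict_mono) auto
      hence "(s-m)^2 + (d-d)^2 < (2*P+m-s)^2" by simp
      thus ?thesis using \<open>\<bar>d\<bar> \<le> m\<close> True by (intro exI[of _ m] exI[of _ d] conjI) auto
    next
      case False
      show ?thesis
      proof (cases "s < \<bar>d\<bar>")
        case True
        have "(s-\<bar>d\<bar>)^2 = (\<bar>d\<bar>-s)^2" by (rule power2_commute)
        also have "\<dots> < (2*P+m-s)^2" using True \<open>\<bar>d\<bar> \<le> m\<close> P by (intro power_strict_mono) auto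
        finally have "(s-\<bar>d\<bar>)^2 + (d-d)^2 < (2*P+m-s)^2" by simp
      thus ?thesis using \<open>\<bar>d\<bar> \<le> m\<close> by (intro exI[of _ "\<bar>d\<bar>"] exI[of _ d] conjI) auto
      next
        case False
        have "0 < (2*P+m-s)^2" using \<open>\<not> s > m\<close> P by simp
        hence "(s-s)^2 + (d-d)^2 < (2*P+m-s)^2" by simp
        thus ?thesis using \<open>\<not> s > m\<close> False by (intro exI[of _ s] exI[of _ d] conjI) auto
      qed
    qed
  next
    case False
    define D where "D = \<bar>d\<bar> - m"
    define S where "S = m - s"
    have D0: "D > 0" using False D_def by simp
    have PS: "P + S > 0" using sl S_def by simp
    have dd: "(d - sgn d * m)^2 = D^2"
    proof (cases "d \<ge> 0")
      case True
      hence "d \<noteq> 0" "d > 0" using D0 m unfolding D_def by auto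
      hence "d - sgn d * m = D" using True unfolding D_def by simp
      thus ?thesis by simp
    next
      case False
      hence "d - sgn d * m = -D" unfolding D_def by simp
      thus ?thesis by simp
    qed
    have "(m + D)^2 = d^2" unfolding D_def by simp
    hence hyp: "(m - S)^2 + (m + D)^2 < (m+P)^2" using h unfolding S_def by simp
    have key: "(2*P+S)^2 - S^2 - D^2 - ((m+P)^2 - (m - S)^2 - (m + D)^2) = (m-S-P)^2 + 2*P*(P+S) + 2*m*D"
      by (simp add: power2_eq_square algebra_simps)
    have "0 \<le> (m-S-P)^2 + 2*P*(P+S) + 2*m*D" using P PS m D0 by (intro add_nonneg_nonneg) auto
    hence f1: "S^2 + D^2 < (2*P+S)^2" using key hyp by linarith
    have f2: "(s - m)^2 = S^2" unfolding S_def by (rule power2_commute)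
    have f3: "(2*P+m-s)^2 = (2*P+S)^2" unfolding S_def by (simp add: algebra_simps)
    have "(s-m)^2 + (d - sgn d * m)^2 < (2*P+m-s)^2" unfolding f2 f3 dd by (rule f1)
    moreover have "\<bar>sgn d * m\<bar> \<le> m" using m by (simp add: abs_mult abs_sgn_eq)
    ultimately show ?thesis using m by (intro exI[of _ m] exI[of _ "sgn d * m"] conjI) auto
  qed
qed

lemma lin3: fixes X Y Z V :: real
  shows "Y < Z \<Longrightarrow> 2*X = Y \<Longrightarrow> Z \<le> 2*V \<Longrightarrow> X < V" by linarith

lemma vec_core:
  fixes zx zsx qx :: "real^'n" and i j :: 'n and u v Wd :: real
  assumes ij: "i \<noteq> j" and u: "u > 0" and v: "v > 0"
    and z1: "0 \<le> zsx$i" and z2: "zsx$j \<le> Wd - v" and z3: "zsx$i + u \<le> zsx$j"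
    and qv: "qx$j + v \<le> qx$i"
    and dz: "dist zsx zx < gfun (zsx$i) (zsx$j) u v"
  shows "\<exists>px. 0 \<le> px$i \<and> px$i \<le> Wd - u \<and> 0 \<le> px$j \<and> px$j \<le> Wd - v
              \<and> px$i + u \<le> px$j \<and> dist zx px < dist zx qx"
proof -
  define a0 where "a0 = zsx$i"
  define b0 where "b0 = zsx$j"
  define a where "a = zx$i"
  define b where "b = zx$j"
  define G where "G = b0 - a0 + (v-u)/2"
  have "b0 - a0 \<ge> u" using z3 unfolding a0_def b0_def by simp
  hence G0: "G > 0" using u v unfolding G_def by (simp add: field_simps)
  have gG: "gfun (zsx$i) (zsx$j) u v = G / sqrt 2"
  proof -
    have "(a0 - b0) + (u - v)/2 = - G" unfolding G_def by (simp add: field_simps)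
    hence "\<bar>(a0 - b0) + (u - v)/2\<bar> = G" using G0 by simp
    thus ?thesis unfolding gfun_def a0_def b0_def by simp
  qed
  have "(dist zsx zx)^2 < (G / sqrt 2)^2"
    using dz gG by (intro power_strict_mono) auto
  hence d2: "2 * (dist zsx zx)^2 < G^2" by (simp add: power_divide)
  have "(dist zsx zx)^2 = (norm (zsx - zx))^2" by (simp add: dist_norm)
  also have "\<dots> = ((zsx - zx)$i)^2 + ((zsx - zx)$j)^2 + (\<Sum>k\<in>UNIV-{i,j}. ((zsx - zx)$k)^2)"
    by (rule nsq[OF ij])
  finally have "(a0-a)^2 + (b0-b)^2 \<le> (dist zsx zx)^2"
    unfolding a0_def b0_def a_def b_def by (simp add: sum_nonneg)
  hence hyp: "2*((a-a0)^2 + (b-b0)^2) < G^2" using d2 by (simp add: power2_commute)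
  define s where "s = (a - a0) + (b0 - b)"
  define d where "d = (a - a0) - (b0 - b)"
  define m where "m = b0 - a0 - u"
  define P where "P = (u+v)/2"
  have P0: "P > 0" using u v P_def by simp
  have m0: "m \<ge> 0" using z3 unfolding m_def a0_def b0_def by simp
  have "s^2 + d^2 = 2*((a-a0)^2 + (b-b0)^2)"
    unfolding s_def d_def by (simp add: power2_eq_square algebra_simps)
  moreover have "G = m + P" unfolding G_def m_def P_def by simp
  ultimately have hc: "s^2 + d^2 < (m+P)^2" using hyp by simp
  have sl: "s < m + P" by (rule core2(1)[OF P0 m0 hc])
  obtain S D where SD: "\<bar>D\<bar> \<le> S" "S \<le> m" "(s-S)^2 + (d-D)^2 < (2*P+m-s)^2"
    using core2(2)[OF P0 m0 hc] by blast
  have R: "2*P+m-s = v - a + b" unfolding P_def m_def s_def by (simp add: field_simps)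
  have Rpos: "v - a + b > 0" using sl P0 R by linarith
  define pa where "pa = a0 + (S+D)/2"
  define pb where "pb = b0 - (S-D)/2"
  define px where "px = (\<chi> k. if k = i then pa else if k = j then pb else qx$k)"
  have pxi: "px$i = pa" and pxj: "px$j = pb" using ij unfolding px_def by auto
  have pxk: "px$k = qx$k" if "k \<noteq> i" "k \<noteq> j" for k using that unfolding px_def by auto
  have e1: "2*((a-pa)^2 + (b-pb)^2) = (s-S)^2 + (d-D)^2"
    unfolding pa_def pb_def s_def d_def by (simp add: power2_eq_square field_simps)
  define qa where "qa = qx$i"
  define qb where "qb = qx$j"
  have "(a-qa) - (b-qb) \<le> -(v - a + b)" using qv unfolding qa_def qb_def by linarith
  hence "(v - a + b)^2 \<le> (-((a-qa) - (b-qb)))^2" using Rpos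
    by (intro power_mono) auto
  hence "(v - a + b)^2 \<le> ((a-qa) - (b-qb))^2" by (simp only: power2_minus)
  also have "\<dots> \<le> 2*((a-qa)^2 + (b-qb)^2)"
    using zero_le_power2[of "(a-qa) + (b-qb)"] by (simp add: power2_eq_square algebra_simps)
  finally have qlow: "(v - a + b)^2 \<le> 2*((a-qa)^2 + (b-qb)^2)" .
  have lt: "(a-pa)^2 + (b-pb)^2 < (a-qa)^2 + (b-qb)^2"
  proof -
    have "(s-S)^2 + (d-D)^2 < (v - a + b)^2" using SD(3) R by simp
    thus ?thesis using e1 qlow by (rule lin3)
  qed
  have "(norm (zx - px))^2 - (norm (zx - qx))^2
        = ((zx - px)$i)^2 + ((zx - px)$j)^2 - ((zx - qx)$i)^2 - ((zx - qx)$j)^2"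
    using ij pxk by (intro gap_ij) auto
  hence "(norm (zx - px))^2 < (norm (zx - qx))^2"
    using lt pxi pxj unfolding a_def b_def qa_def qb_def by simp
  hence "norm (zx - px) < norm (zx - qx)" by (rule power2_less_imp_less) simp
  hence dlt: "dist zx px < dist zx qx" by (simp add: dist_norm)
  have DS1: "D \<le> S" using SD(1) by (rule abs_le_D1)
  have DS2: "-D \<le> S" using SD(1) by (rule abs_le_D2)
  have "0 \<le> S + D" using DS2 by linarith
  hence h1: "(S+D)/2 \<ge> 0" by (rule divide_nonneg_pos) simp
  have "0 \<le> S - D" using DS1 by linarith
  hence h2: "(S-D)/2 \<ge> 0" by (rule divide_nonneg_pos) simp
  have pab: "pb - pa = b0 - a0 - S" unfolding pa_def pb_def by (simp add: field_simps)
  have c1: "0 \<le> px$i" using pxi h1 z1 unfolding pa_def a0_def by linarith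
  have c2: "px$i + u \<le> px$j" using pxi pxj pab SD(2) unfolding m_def by linarith
  have c3: "px$j \<le> b0" using pxj h2 unfolding pb_def by linarith
  have c4: "px$j \<le> Wd - v" using c3 z2 unfolding b0_def by linarith
  have c5: "px$i \<le> Wd - u" using c2 c4 v by linarith
  have c6: "0 \<le> px$j" using c1 c2 u by linarith
  show ?thesis by (rule exI[of _ px]) (intro conjI c1 c5 c6 c4 c2 dlt)
qed


lemma xlem:
  fixes z zs q :: "'n::finite pt"
  assumes ij: "i \<noteq> j" and wi: "w i > 0" and wj: "w j > 0"
    and zs: "zs \<in> Ox w i j \<inter> Bij W H w h i j"
    and q: "q \<in> Ox w j i \<inter> Bij W H w h i j"
    and dz: "dist zs z < gfun (fst zs $ i) (fst zs $ j) (w i) (w j)"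
  shows "\<exists>p \<in> Ox w i j \<inter> Bij W H w h i j. dist z p < dist z q"
proof -
  have z1: "0 \<le> fst zs $ i" and z2: "fst zs $ j \<le> W - w j" and z3: "fst zs $ i + w i \<le> fst zs $ j"
    using zs by (auto simp: Ox_def Bij_def Bx_def)
  have qc: "fst q $ j + w j \<le> fst q $ i" using q by (auto simp: Ox_def)
  have d1: "dist (fst zs) (fst z) < gfun (fst zs $ i) (fst zs $ j) (w i) (w j)"
    using dist_fst_le[of zs z] dz by linarith
  obtain px where px: "0 \<le> px$i" "px$i \<le> W - w i" "0 \<le> px$j" "px$j \<le> W - w j"
      "px$i + w i \<le> px$j" "dist (fst z) px < dist (fst z) (fst q)"
    using vec_core[OF ij wi wj z1 z2 z3 qc d1] by blast
  define p where "p = (px, snd q)"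
  have "p \<in> Ox w i j \<inter> Bij W H w h i j"
    using px q unfolding p_def by (auto simp: Ox_def Bij_def Bx_def By_def)
  moreover have "dist z p < dist z q"
  proof -
    have "dist z p = sqrt ((dist (fst z) px)^2 + (dist (snd z) (snd q))^2)"
      using dist_Pair_Pair[of "fst z" "snd z" px "snd q"] unfolding p_def by simp
    also have "\<dots> < sqrt ((dist (fst z) (fst q))^2 + (dist (snd z) (snd q))^2)"
      using px(6) by (intro real_sqrt_less_mono add_strict_right_mono power_strict_mono) auto
    also have "\<dots> = dist z q"
      using dist_Pair_Pair[of "fst z" "snd z" "fst q" "snd q"] by simp
    finally show ?thesis .
  qed
  ultimately show ?thesis by blast
qed

lemma ylem:
  fixes z zs q :: "'n::finite pt"
  assumes ij: "i \<noteq> j" and hi: "h i > 0" and hj: "h j > 0"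
    and zs: "zs \<in> Oy h i j \<inter> Bij W H w h i j"
    and q: "q \<in> Oy h j i \<inter> Bij W H w h i j"
    and dz: "dist zs z < gfun (snd zs $ i) (snd zs $ j) (h i) (h j)"
  shows "\<exists>p \<in> Oy h i j \<inter> Bij W H w h i j. dist z p < dist z q"
proof -
  have z1: "0 \<le> snd zs $ i" and z2: "snd zs $ j \<le> H - h j" and z3: "snd zs $ i + h i \<le> snd zs $ j"
    using zs by (auto simp: Oy_def Bij_def By_def)
  have qc: "snd q $ j + h j \<le> snd q $ i" using q by (auto simp: Oy_def)
  have d1: "dist (snd zs) (snd z) < gfun (snd zs $ i) (snd zs $ j) (h i) (h j)"
    using dist_snd_le[of zs z] dz by linarith
  obtain py where py: "0 \<le> py$i" "py$i \<le> H - h i" "0 \<le> py$j" "py$j \<le> H - h j"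
      "py$i + h i \<le> py$j" "dist (snd z) py < dist (snd z) (snd q)"
    using vec_core[OF ij hi hj z1 z2 z3 qc d1] by blast
  define p where "p = (fst q, py)"
  have "p \<in> Oy h i j \<inter> Bij W H w h i j"
    using py q unfolding p_def by (auto simp: Oy_def Bij_def Bx_def By_def)
  moreover have "dist z p < dist z q"
  proof -
    have "dist z p = sqrt ((dist (fst z) (fst q))^2 + (dist (snd z) py)^2)"
      using dist_Pair_Pair[of "fst z" "snd z" "fst q" py] unfolding p_def by simp
    also have "\<dots> < sqrt ((dist (fst z) (fst q))^2 + (dist (snd z) (snd q))^2)"
      using py(6) by (intro real_sqrt_less_mono add_strict_left_mono power_strict_mono) auto
    also have "\<dots> = dist z q"
      using dist_Pair_Pair[of "fst z" "snd z" "fst q" "snd q"] by simp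
    finally show ?thesis .
  qed
  ultimately show ?thesis by blast
qed

lemma esc_pick:
  fixes zs z :: "'a::real_normed_vector"
  assumes zsA: "zs \<in> A" and esc: "\<And>y. norm (y - zs) < de \<Longrightarrow> y \<in> A"
    and d1: "dist zs z < ds" and d2: "2 * dist zs z < ds + de"
  shows "\<exists>p \<in> A. dist z p < ds - dist zs z"
proof -
  define t where "t = dist zs z"
  have t0: "t \<ge> 0" unfolding t_def by simp
  show ?thesis
  proof (cases "2 * t < ds")
    case True
    thus ?thesis using zsA by (intro bexI[of _ zs]) (auto simp: t_def dist_commute)
  next
    case c1: False
    show ?thesis
    proof (cases "t < de")
      case True
      hence "z \<in> A" using esc[of z] by (simp add: t_def dist_norm norm_minus_commute)
      thus ?thesis using d1 by (intro bexI[of _ z]) auto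
    next
      case c2: False
      have tpos: "t > 0" using c1 d1 t_def by linarith
      define e where "e = (2*t - ds + de)/2"
      define mu where "mu = e / t"
      have e2: "2*e = 2*t - ds + de" unfolding e_def by simp
      have e0: "e > 0" using c1 d2 e2 unfolding t_def by linarith
      have et: "e \<le> t" using c2 d1 e2 unfolding t_def by linarith
      have ede: "e < de" using d2 e2 unfolding t_def by linarith
      have mu0: "0 \<le> mu" and mu1: "mu \<le> 1" using e0 et tpos unfolding mu_def by (auto simp: field_simps)
      define p where "p = zs + mu *\<^sub>R (z - zs)"
      have np: "norm (p - zs) = e"
        using mu0 tpos e0 unfolding p_def mu_def t_def by (simp add: dist_norm norm_minus_commute)
      have "p \<in> A" using esc[of p] np ede by simp
      moreover have "dist z p = t - e"
      proof -
        have "z - p = (1 - mu) *\<^sub>R (z - zs)" unfolding p_def by (simp add: algebra_simps)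
        hence "dist z p = (1 - mu) * t" using mu1 unfolding t_def
          by (simp add: dist_norm norm_minus_commute)
        also have "\<dots> = t - e" using tpos unfolding mu_def by (simp add: field_simps)
        finally show ?thesis .
      qed
      moreover have "t - e < ds - t" using d2 e2 unfolding t_def by linarith
      ultimately show ?thesis unfolding t_def by (intro bexI[of _ p]) auto
    qed
  qed
qed

lemma lbl_UNIV: "(UNIV :: lbl set) = {Lf, Rt, Bw, Ab}"
proof -
  have "x \<in> {Lf, Rt, Bw, Ab}" for x :: lbl by (cases x) auto
  thus ?thesis by auto
qed

lemma finite_lbl: "finite (A :: lbl set)"
proof -
  have "finite (UNIV :: lbl set)" by (simp add: lbl_UNIV)
  thus ?thesis by (rule finite_subset[rotated]) simp
qed

lemma closed_piece: "closed (Cpiece W H w h i j k)"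
  unfolding Cpiece_def Ox_def Oy_def Bij_def Bx_def By_def
  by (cases k) (auto intro!: closed_Collect_conj closed_Collect_le continuous_intros)

lemma Bij_sym: "Bij W H w h i j = Bij W H w h j i"
  by (auto simp: Bij_def)

lemma gfun_sym: "gfun a b c d = gfun b a d c"
proof -
  have e: "(b - a) + (d - c)/2 = - ((a - b) + (c - d)/2)" by (simp add: field_simps)
  have "\<bar>(b - a) + (d - c)/2\<bar> = \<bar>(a - b) + (c - d)/2\<bar>" unfolding e by (rule abs_minus_cancel)
  thus ?thesis unfolding gfun_def by (simp only:)
qed

lemma notinK:
  assumes cl: "closed (Cpiece W H w h i j k)" and ne: "Cpiece W H w h i j k \<noteq> {}"
    and ex: "\<And>q. q \<in> Cpiece W H w h i j k \<Longrightarrow> \<exists>p \<in> Cpair W H w h i j. dist z p < dist z q"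
  shows "k \<notin> Kact W H w h i j z"
proof
  assume "k \<in> Kact W H w h i j z"
  hence P: "closest_point (Cpiece W H w h i j k) z \<in> Pset (Cpair W H w h i j) z"
    by (simp add: Kact_def)
  obtain p where p: "p \<in> Cpair W H w h i j" "dist z p < dist z (closest_point (Cpiece W H w h i j k) z)"
    using ex[OF closest_point_in_set[OF cl ne]] by blast
  have "dist z (closest_point (Cpiece W H w h i j k) z) = infdist z (Cpair W H w h i j)"
    using P by (simp add: Pset_def)
  also have "\<dots> \<le> dist z p" using p(1) by (rule infdist_le)
  finally show False using p(2) by simp
qed

lemma piece_sub: "Cpiece W H w h i j k \<subseteq> Cpair W H w h i j"
  by (auto simp: Cpair_def)



lemma card2_pair:
  assumes "finite K" "card K = 2" "K \<subseteq> {a, b}"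
  shows "a \<in> K \<and> b \<in> K"
proof (rule ccontr)
  assume "\<not> (a \<in> K \<and> b \<in> K)"
  then obtain c where "K \<subseteq> {c}" using assms(3) by blast
  hence "card K \<le> card {c}" by (intro card_mono) auto
  thus False using assms(2) by simp
qed

theorem mainTheorem7:
  fixes W H lam :: real
    and w h :: "'n::{finite, linorder} \<Rightarrow> real"
    and i j :: 'n
    and zs :: "'n pt"
  assumes "W > 0" and "H > 0"
    and "i < j"
    and "w i > 0" and "w j > 0" and "h i > 0" and "h j > 0"
    and "0 < lam" and "lam < 2"
    and "\<And>k. Cpiece W H w h i j k \<noteq> {}"
    and "zs \<in> FixT lam (Cpair W H w h i j)"
  shows "\<forall>z \<in> ball zs (rad W H w h i j zs). Kact W H w h i j z \<subseteq> Kact W H w h i j zs"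
proof -
  have ij: "i \<noteq> j" using assms(3) by simp
  have zsC: "zs \<in> Cpair W H w h i j"
  proof -
    obtain p where p: "zs = zs + lam *\<^sub>R (p - zs)" "p \<in> Pset (Cpair W H w h i j) zs"
      using assms(11) unfolding FixT_def Tmap_def by blast
    have "lam *\<^sub>R (p - zs) = 0" using p(1) by (metis add.right_neutral add_left_cancel)
    hence "p = zs" using assms(8) by simp
    thus ?thesis using p(2) by (simp add: Pset_def)
  qed
  have PZ: "Pset (Cpair W H w h i j) zs = {zs}" using zsC by (auto simp: Pset_def)
  have KZ: "Kact W H w h i j zs = {k. zs \<in> Cpiece W H w h i j k}"
    unfolding Kact_def PZ by (auto simp: closest_point_refl[OF closed_piece assms(10)])
  show ?thesis
  proof (intro ballI subsetI)
    fix z k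
    assume zb: "z \<in> ball zs (rad W H w h i j zs)" and kz: "k \<in> Kact W H w h i j z"
    have dr: "dist zs z < rad W H w h i j zs" using zb by simp
    show "k \<in> Kact W H w h i j zs"
    proof (rule ccontr)
      assume kn: "k \<notin> Kact W H w h i j zs"
      hence zsn: "zs \<notin> Cpiece W H w h i j k" using KZ by simp
      have "k \<notin> Kact W H w h i j z"
      proof (rule notinK[OF closed_piece assms(10)])
        fix q assume q: "q \<in> Cpiece W H w h i j k"
        show "\<exists>p \<in> Cpair W H w h i j. dist z p < dist z q"
        proof (cases "card (Kact W H w h i j zs) = 1")
          case True
          then obtain k0 where K0: "Kact W H w h i j zs = {k0}" by (rule card_1_singletonE)
          define ds where "ds = d_sep W H w h i j zs"
          define de where "de = d_esc W H w h i j zs"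
          have rad1: "rad W H w h i j zs = min ds ((ds + de)/2)"
            using True unfolding rad_def ds_def de_def by simp
          have d1: "dist zs z < ds" and d2: "2 * dist zs z < ds + de" using dr rad1 by auto
          have k0C: "zs \<in> Cpiece W H w h i j k0" using K0 KZ by auto
          have dsle: "ds \<le> infdist zs (Cpiece W H w h i j k)"
          proof -
            have fin: "finite {infdist zs (Cpiece W H w h i j k) | k. k \<notin> Kact W H w h i j zs}"
              using finite_lbl by simp
            show ?thesis unfolding ds_def d_sep_def using kn by (intro Min_le fin) auto
          qed
          have esc: "y \<in> Cpiece W H w h i j k0" if "norm (y - zs) < de" for y
          proof (rule ccontr)
            assume "y \<notin> Cpiece W H w h i j k0"
            hence "norm (y - zs) \<in> {norm (z - zs) | z. \<exists>k \<in> Kact W H w h i j zs. z \<notin> Cpiece W H w h i j k}"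
              unfolding K0 by blast
            hence "de \<le> norm (y - zs)" unfolding de_def d_esc_def
              by (rule cInf_lower) (rule bdd_belowI[of _ 0], auto)
            thus False using that by simp
          qed
          obtain p where p: "p \<in> Cpiece W H w h i j k0" "dist z p < ds - dist zs z"
            using esc_pick[OF k0C esc d1 d2] by blast
          have "ds - dist zs z \<le> infdist z (Cpiece W H w h i j k)"
            using dsle infdist_triangle[of zs "Cpiece W H w h i j k" z] by (simp add: dist_commute)
          also have "\<dots> \<le> dist z q" using q by (rule infdist_le)
          finally have fq: "ds - dist zs z \<le> dist z q" .
          have "p \<in> Cpair W H w h i j" using p(1) piece_sub by blast
          thus ?thesis using p(2) fq by (intro bexI[of _ p]) auto
        next
          case False
          show ?thesis
          proof (cases "card (Kact W H w h i j zs) = 2")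
            case True
            define gx where "gx = gfun (fst zs $ i) (fst zs $ j) (w i) (w j)"
            define gy where "gy = gfun (snd zs $ i) (snd zs $ j) (h i) (h j)"
            have rad2: "rad W H w h i j zs = min gx gy"
              using False True unfolding rad_def gx_def gy_def by simp
            have dx: "dist zs z < gx" and dy: "dist zs z < gy" using dr rad2 by auto
            have finK: "finite (Kact W H w h i j zs)" by (rule finite_lbl)
            have exLR: "\<not> (zs \<in> Cpiece W H w h i j Lf \<and> zs \<in> Cpiece W H w h i j Rt)"
              using assms(4,5) by (auto simp: Cpiece_def Ox_def)
            have exBA: "\<not> (zs \<in> Cpiece W H w h i j Bw \<and> zs \<in> Cpiece W H w h i j Ab)"
              using assms(6,7) by (auto simp: Cpiece_def Oy_def)
            have xin: "zs \<in> Cpiece W H w h i j Lf \<or> zs \<in> Cpiece W H w h i j Rt"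
            proof (rule ccontr)
              assume nx: "\<not> ?thesis"
              have "Kact W H w h i j zs \<subseteq> {Bw, Ab}"
              proof
                fix k' assume "k' \<in> Kact W H w h i j zs"
                thus "k' \<in> {Bw, Ab}" using nx KZ by (cases k') auto
              qed
              hence "Bw \<in> Kact W H w h i j zs \<and> Ab \<in> Kact W H w h i j zs"
                using card2_pair[OF finK True] by blast
              thus False using exBA KZ by auto
            qed
            have yin: "zs \<in> Cpiece W H w h i j Bw \<or> zs \<in> Cpiece W H w h i j Ab"
            proof (rule ccontr)
              assume ny: "\<not> ?thesis"
              have "Kact W H w h i j zs \<subseteq> {Lf, Rt}"
              proof
                fix k' assume "k' \<in> Kact W H w h i j zs"
                thus "k' \<in> {Lf, Rt}" using ny KZ by (cases k') auto
              qed
              hence "Lf \<in> Kact W H w h i j zs \<and> Rt \<in> Kact W H w h i j zs"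
                using card2_pair[OF finK True] by blast
              thus False using exLR KZ by auto
            qed
            have bs: "Bij W H w h j i = Bij W H w h i j" by (rule Bij_sym)
            show ?thesis
            proof (cases k)
              case Lf
              hence zsR: "zs \<in> Cpiece W H w h i j Rt" using xin zsn by auto
              have A: "zs \<in> Ox w j i \<inter> Bij W H w h j i" unfolding bs using zsR by (simp add: Cpiece_def)
              have B: "q \<in> Ox w i j \<inter> Bij W H w h j i" unfolding bs using q Lf by (simp add: Cpiece_def)
              have Cc: "dist zs z < gfun (fst zs $ j) (fst zs $ i) (w j) (w i)"
                using dx gfun_sym[of "fst zs $ i" "fst zs $ j" "w i" "w j"] unfolding gx_def by simp
              obtain p where p: "p \<in> Ox w j i \<inter> Bij W H w h j i" "dist z p < dist z q"
                using xlem[OF ij[symmetric] assms(5) assms(4) A B Cc] by blast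
              have "p \<in> Cpiece W H w h i j Rt" using p(1) unfolding bs by (simp add: Cpiece_def)
              hence "p \<in> Cpair W H w h i j" using piece_sub by blast
              thus ?thesis using p(2) by blast
            next
              case Rt
              hence zsL: "zs \<in> Cpiece W H w h i j Lf" using xin zsn by auto
              have A: "zs \<in> Ox w i j \<inter> Bij W H w h i j" using zsL by (simp add: Cpiece_def)
              have B: "q \<in> Ox w j i \<inter> Bij W H w h i j" using q Rt by (simp add: Cpiece_def)
              obtain p where p: "p \<in> Ox w i j \<inter> Bij W H w h i j" "dist z p < dist z q"
                using xlem[OF ij assms(4) assms(5) A B] dx unfolding gx_def by blast
              have "p \<in> Cpiece W H w h i j Lf" using p(1) by (simp add: Cpiece_def)
              hence "p \<in> Cpair W H w h i j" using piece_sub by blast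
              thus ?thesis using p(2) by blast
            next
              case Bw
              hence zsA: "zs \<in> Cpiece W H w h i j Ab" using yin zsn by auto
              have A: "zs \<in> Oy h j i \<inter> Bij W H w h j i" unfolding bs using zsA by (simp add: Cpiece_def)
              have B: "q \<in> Oy h i j \<inter> Bij W H w h j i" unfolding bs using q Bw by (simp add: Cpiece_def)
              have Cc: "dist zs z < gfun (snd zs $ j) (snd zs $ i) (h j) (h i)"
                using dy gfun_sym[of "snd zs $ i" "snd zs $ j" "h i" "h j"] unfolding gy_def by simp
              obtain p where p: "p \<in> Oy h j i \<inter> Bij W H w h j i" "dist z p < dist z q"
                using ylem[OF ij[symmetric] assms(7) assms(6) A B Cc] by blast
              have "p \<in> Cpiece W H w h i j Ab" using p(1) unfolding bs by (simp add: Cpiece_def)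
              hence "p \<in> Cpair W H w h i j" using piece_sub by blast
              thus ?thesis using p(2) by blast
            next
              case Ab
              hence zsB: "zs \<in> Cpiece W H w h i j Bw" using yin zsn by auto
              have A: "zs \<in> Oy h i j \<inter> Bij W H w h i j" using zsB by (simp add: Cpiece_def)
              have B: "q \<in> Oy h j i \<inter> Bij W H w h i j" using q Ab by (simp add: Cpiece_def)
              obtain p where p: "p \<in> Oy h i j \<inter> Bij W H w h i j" "dist z p < dist z q"
                using ylem[OF ij assms(6) assms(7) A B] dy unfolding gy_def by blast
              have "p \<in> Cpiece W H w h i j Bw" using p(1) by (simp add: Cpiece_def)
              hence "p \<in> Cpair W H w h i j" using piece_sub by blast
              thus ?thesis using p(2) by blast
            qed
          next
            case False2: False
            have "rad W H w h i j zs = 0" using False False2 unfolding rad_def by simp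
            hence False using dr by simp
            thus ?thesis by simp
          qed
        qed
      qed
      thus False using kz by simp
    qed
  qed
qed

end
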